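(* Let $T \ge 1$ be an integer and $p^* \in (0,1]$. For integers $l \ge 1$ and $0 \le n \le l-1$ with $l-n \le T$ put $$P^l(n)=\frac{\prod_{i=0}^{l-n-1}\left(1-\frac{i}{T}\right)}{T^{n}}.$$ Fix a sequence $L_1, L_2, L_3,\dots$ of pairwise distinct items (loopback 3-tuples). A device $D$ is modeled by a function $g_D$ from $\{L_1,L_2,\dots\}$ to $\{0,1,\dots,T-1\}$. For $i\ge 1$, the collision structure of $D$ after $i$ iterations is the partition of $\{L_1,\dots,L_i\}$ into the nonempty fibers of $g_D$ restricted to $\{L_1,\dots,L_i\}$; let $n_i(D)$ be $i$ minus the number of blocks of this partition (the number of independent collisions). The phase-2 procedure processes $L_1, L_2,\dots$ in this fixed order and stops at the least $i$ with $P^i(n_i(D)) \le p^*$; call this index $l(D)$ (assumed to exist). Its output, the device ID of $D$, is the pair $(C_D, l(D))$, where $C_D$ is the set of all pairs $(L_j, B)$ with $j \le l(D)$, $L_j$ not the first (lowest-index) element of its block in the collision structure after $l(D)$ iterations, and $B$ the first element of that block. Let $D$ and $D'$ be devices, and let $l=l(D)$. If the collision structure of $D'$ after $l$ iterations equals the collision structure of $D$ after $l$ iterations, then $D'$ and $D$ have identical device IDs, i.e. $l(D')=l$ and $C_{D'}=C_D$.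
   Context: This models the device-ID computation for the Double-Hash Port Selection algorithm: each loopback 3-tuple $L_i$ is hashed by a keyed hash into one of $T$ perturbation-table cells, and the attacker only observes which tuples share a cell. The order in which the tuples $L_i$ are tested is deterministic and the same for all devices. *)

theory Defs
  imports Complex_Main
begin

definition Pl :: "nat \<Rightarrow> nat \<Rightarrow> nat \<Rightarrow> real" where
  "Pl T l n = (\<Prod>i<l - n. 1 - real i / real T) / real T ^ n"

definition items :: "(nat \<Rightarrow> 'a) \<Rightarrow> nat \<Rightarrow> 'a set" where
  "items L i = L ` {1..i}"

definition coll_struct :: "(nat \<Rightarrow> 'a) \<Rightarrow> ('a \<Rightarrow> nat) \<Rightarrow> nat \<Rightarrow> 'a set set" where
  "coll_struct L g i = (\<lambda>y. {x \<in> items L i. g x = g y}) ` items L i"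

definition ncoll :: "(nat \<Rightarrow> 'a) \<Rightarrow> ('a \<Rightarrow> nat) \<Rightarrow> nat \<Rightarrow> nat" where
  "ncoll L g i = i - card (coll_struct L g i)"

definition stop_idx :: "nat \<Rightarrow> real \<Rightarrow> (nat \<Rightarrow> 'a) \<Rightarrow> ('a \<Rightarrow> nat) \<Rightarrow> nat" where
  "stop_idx T p L g = (LEAST i. 1 \<le> i \<and> Pl T i (ncoll L g i) \<le> p)"

definition first_elem :: "(nat \<Rightarrow> 'a) \<Rightarrow> 'a set \<Rightarrow> 'a" where
  "first_elem L B = L (LEAST k. 1 \<le> k \<and> L k \<in> B)"

definition coll_set :: "nat \<Rightarrow> real \<Rightarrow> (nat \<Rightarrow> 'a) \<Rightarrow> ('a \<Rightarrow> nat) \<Rightarrow> ('a \<times> 'a) set" where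
  "coll_set T p L g =
     (let l = stop_idx T p L g in
      {(L j, first_elem L B) | j B. 1 \<le> j \<and> j \<le> l \<and> B \<in> coll_struct L g l \<and>
                                  L j \<in> B \<and> L j \<noteq> first_elem L B})"

definition device_id :: "nat \<Rightarrow> real \<Rightarrow> (nat \<Rightarrow> 'a) \<Rightarrow> ('a \<Rightarrow> nat) \<Rightarrow> ('a \<times> 'a) set \<times> nat" where
  "device_id T p L g = (coll_set T p L g, stop_idx T p L g)"

end

theory Submission
  imports Defs
begin

lemma block_eq:
  assumes "coll_struct L g' l = coll_struct L g l" and "y \<in> items L l"
  shows "{x \<in> items L l. g' x = g' y} = {x \<in> items L l. g x = g y}"
proof -
  have "{x \<in> items L l. g' x = g' y} \<in> coll_struct L g l"
  proof -
    have "{x \<in> items L l. g' x = g' y} \<in> coll_struct L g' l"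
      unfolding coll_struct_def using assms(2) by (rule imageI)
    then show ?thesis using assms(1) by simp
  qed
  then obtain z where z: "z \<in> items L l" "{x \<in> items L l. g' x = g' y} = {x \<in> items L l. g x = g z}"
    unfolding coll_struct_def by auto
  have "y \<in> {x \<in> items L l. g' x = g' y}" using assms(2) by simp
  then have "g y = g z" using z by auto
  then show ?thesis using z by auto
qed

lemma rel_eq:
  assumes "coll_struct L g' l = coll_struct L g l" and "x \<in> items L l" and "y \<in> items L l"
  shows "(g' x = g' y) = (g x = g y)"
  using block_eq[OF assms(1,3)] assms(2) by blast

lemma items_mono: "i \<le> l \<Longrightarrow> items L i \<subseteq> items L l"
  unfolding items_def by auto

lemma cs_eq:
  assumes "coll_struct L g' l = coll_struct L g l" and "i \<le> l"
  shows "coll_struct L g' i = coll_struct L g i"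
proof -
  have r: "\<And>x y. x \<in> items L i \<Longrightarrow> y \<in> items L i \<Longrightarrow> (g' x = g' y) = (g x = g y)"
  proof -
    fix x y assume "x \<in> items L i" "y \<in> items L i"
    moreover have "items L i \<subseteq> items L l" using assms(2) by (rule items_mono)
    ultimately have "x \<in> items L l" "y \<in> items L l" by (simp_all add: subset_iff)
    then show "(g' x = g' y) = (g x = g y)" by (rule rel_eq[OF assms(1)])
  qed
  show ?thesis unfolding coll_struct_def
    by (rule image_cong) (auto simp: r)
qed

theorem lemma1:
  fixes T :: nat and p :: real and L :: "nat \<Rightarrow> 'a" and g g' :: "'a \<Rightarrow> nat"
  assumes "T \<ge> 1" and "0 < p" and "p \<le> 1"
    and "inj_on L {1..}"
    and "\<forall>j\<ge>1. g (L j) < T" and "\<forall>j\<ge>1. g' (L j) < T"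
    and "\<exists>i\<ge>1. Pl T i (ncoll L g i) \<le> p"
    and "coll_struct L g' (stop_idx T p L g) = coll_struct L g (stop_idx T p L g)"
  shows "stop_idx T p L g' = stop_idx T p L g \<and> coll_set T p L g' = coll_set T p L g"
proof -
  define l where "l = stop_idx T p L g"
  have cs: "coll_struct L g' l = coll_struct L g l" using assms(8) l_def by simp
  have nc: "\<And>i. i \<le> l \<Longrightarrow> ncoll L g' i = ncoll L g i"
    unfolding ncoll_def using cs_eq[OF cs] by simp
  have Pl: "1 \<le> l \<and> Pl T l (ncoll L g l) \<le> p"
    unfolding l_def stop_idx_def using assms(7) by (rule LeastI_ex)
  have nP: "\<And>i. i < l \<Longrightarrow> \<not> (1 \<le> i \<and> Pl T i (ncoll L g i) \<le> p)"
    unfolding l_def stop_idx_def by (rule not_less_Least)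
  have st: "stop_idx T p L g' = l"
    unfolding stop_idx_def
  proof (rule Least_equality)
    show "1 \<le> l \<and> Pl T l (ncoll L g' l) \<le> p" using Pl nc by simp
  next
    fix y assume "1 \<le> y \<and> Pl T y (ncoll L g' y) \<le> p"
    then show "l \<le> y" using nP nc by (metis less_imp_le not_le)
  qed
  show ?thesis
    using st cs unfolding coll_set_def l_def[symmetric] by (simp add: Let_def)
qed

end
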